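(* Let $G$ be a finite abelian group with basis $(e_1,\dots,e_s)$ and dual basis $(\chi_1,\dots,\chi_s)$ of $G^*$. Let $I=\{1,\dots,k\}\subseteq I_G$ be a subset with $k$ elements $i=(H_i,\psi_i)$ such that the natural map $H_1\oplus\dots\oplus H_k\to G$ is surjective. Then the $k\times s$ matrix $(r^i_j)_{1\le i\le k,\,1\le j\le s}$ has rank $s$ over $\mathbb{Q}$.
   Context: A basis of $G$ is a sequence $(e_1,\dots,e_s)$ of elements such that $G$ is the direct sum of the cyclic subgroups $\langle e_j\rangle$ and $\mathrm{ord}(e_j)$ divides $\mathrm{ord}(e_{j+1})$ for $j<s$. The dual basis is $(\chi_1,\dots,\chi_s)$ with $\chi_j(e_i)=1$ for $i\ne j$ and $\chi_i(e_i)=e^{2\pi\sqrt{-1}/\mathrm{ord}(e_i)}$. $I_G$ is the set of pairs $(H,\psi)$ with $H\le G$ cyclic of order $\ge2$ and $\psi$ a generator of $H^*=\mathrm{Hom}(H,\mathbb{C}^* )$. For $i=(H_i,\psi_i)$, $m_i=\#H_i$, and $r^i_j$ is the unique integer with $0\le r^i_j<m_i$ and $\chi_j|_{H_i}=\psi_i^{r^i_j}$. *)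

theory Defs
  imports "HOL-Algebra.Algebra" "Jordan_Normal_Form.DL_Rank"
begin

definition is_basis :: "('a, 'b) monoid_scheme \<Rightarrow> nat \<Rightarrow> (nat \<Rightarrow> 'a) \<Rightarrow> bool" where
  "is_basis G s e \<longleftrightarrow>
     (\<forall>j<s. e j \<in> carrier G \<and> e j \<noteq> \<one>\<^bsub>G\<^esub>) \<and>
     (\<forall>j. Suc j < s \<longrightarrow> group.ord G (e j) dvd group.ord G (e (Suc j))) \<and>
     bij_betw (\<lambda>x. finprod G x {..<s}) (PiE {..<s} (\<lambda>j. generate G {e j})) (carrier G)"

definition char_on :: "('a, 'b) monoid_scheme \<Rightarrow> 'a set \<Rightarrow> ('a \<Rightarrow> complex) \<Rightarrow> bool" where
  "char_on G H \<psi> \<longleftrightarrow> (\<forall>x\<in>H. \<psi> x \<noteq> 0) \<and> (\<forall>x\<in>H. \<forall>y\<in>H. \<psi> (x \<otimes>\<^bsub>G\<^esub> y) = \<psi> x * \<psi> y)"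

definition is_dual_basis :: "('a, 'b) monoid_scheme \<Rightarrow> nat \<Rightarrow> (nat \<Rightarrow> 'a) \<Rightarrow> (nat \<Rightarrow> 'a \<Rightarrow> complex) \<Rightarrow> bool" where
  "is_dual_basis G s e \<chi> \<longleftrightarrow>
     (\<forall>j<s. char_on G (carrier G) (\<chi> j)) \<and>
     (\<forall>i<s. \<forall>j<s. \<chi> j (e i) =
        (if i = j then exp (2 * pi * \<i> / of_nat (group.ord G (e i))) else 1))"

definition generates_dual :: "('a, 'b) monoid_scheme \<Rightarrow> 'a set \<Rightarrow> ('a \<Rightarrow> complex) \<Rightarrow> bool" where
  "generates_dual G H \<psi> \<longleftrightarrow> char_on G H \<psi> \<and>
     (\<forall>\<phi>. char_on G H \<phi> \<longrightarrow> (\<exists>n::nat. \<forall>x\<in>H. \<phi> x = \<psi> x ^ n))"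

definition in_IG :: "('a, 'b) monoid_scheme \<Rightarrow> 'a set \<Rightarrow> ('a \<Rightarrow> complex) \<Rightarrow> bool" where
  "in_IG G H \<psi> \<longleftrightarrow> subgroup H G \<and> cyclic_group (subgroup_generated G H) \<and> card H \<ge> 2
     \<and> generates_dual G H \<psi>"

definition r_coef :: "'a set \<Rightarrow> ('a \<Rightarrow> complex) \<Rightarrow> ('a \<Rightarrow> complex) \<Rightarrow> nat" where
  "r_coef H \<psi> \<chi> = (THE r. r < card H \<and> (\<forall>x\<in>H. \<chi> x = \<psi> x ^ r))"

end

theory Submission
  imports Defs
begin

lemma root_int:
  fixes m::nat and a::int assumes "m \<ge> 1"
  shows "exp (2 * pi * \<i> / of_nat m) powi a = 1 \<longleftrightarrow> int m dvd a"
proof -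
  define th where "th = 2 * pi * real_of_int a / real m"
  have "exp (2 * pi * \<i> / of_nat m) powi a = exp (of_int a * (2 * pi * \<i> / of_nat m))"
    by (rule exp_power_int)
  also have "of_int a * (2 * pi * \<i> / of_nat m) = \<i> * complex_of_real th"
    unfolding th_def by (simp add: field_simps)
  finally have e: "exp (2 * pi * \<i> / of_nat m) powi a = cis th" by (simp add: cis_conv_exp)
  have "cis th = 1 \<longleftrightarrow> cos th = 1"
    using cos_one_sin_zero[of th] by (auto simp: complex_eq_iff)
  also have "\<dots> \<longleftrightarrow> (\<exists>n::int. th = of_int n * 2 * pi)" by (rule cos_one_2pi_int)
  also have "\<dots> \<longleftrightarrow> int m dvd a"
  proof
    assume "\<exists>n::int. th = of_int n * 2 * pi"
    then obtain n::int where "th = of_int n * 2 * pi" by blast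
    then have "real_of_int a = real m * of_int n" using assms pi_gt_zero
      unfolding th_def by (simp add: field_simps)
    then have "a = int m * n"
      by (metis of_int_eq_iff of_int_mult of_int_of_nat_eq)
    then show "int m dvd a" by simp
  next
    assume "int m dvd a"
    then obtain n where "a = int m * n" by (auto elim: dvdE)
    then show "\<exists>n::int. th = of_int n * 2 * pi"
      using assms unfolding th_def by (intro exI[of _ n]) (simp add: field_simps)
  qed
  finally show ?thesis using e by simp
qed

lemma root_nat:
  fixes m n::nat assumes "m \<ge> 1"
  shows "exp (2 * pi * \<i> / of_nat m) ^ n = 1 \<longleftrightarrow> m dvd n"
  using root_int[OF assms, of "int n"] by simp

lemma power_int_sum:
  fixes x :: "'a::field" assumes "x \<noteq> 0"
  shows "x powi (sum f A) = (\<Prod>i\<in>A. x powi f i)"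
  by (induction A rule: infinite_finite_induct) (auto simp: power_int_add assms)

lemma char_one:
  assumes "char_on G S \<phi>" "\<one>\<^bsub>G\<^esub> \<in> S" "monoid G"
  shows "\<phi> \<one>\<^bsub>G\<^esub> = 1"
proof -
  have o: "\<one>\<^bsub>G\<^esub> \<otimes>\<^bsub>G\<^esub> \<one>\<^bsub>G\<^esub> = \<one>\<^bsub>G\<^esub>"
    using monoid.l_one[OF assms(3) monoid.one_closed[OF assms(3)]] .
  have "\<phi> (\<one>\<^bsub>G\<^esub> \<otimes>\<^bsub>G\<^esub> \<one>\<^bsub>G\<^esub>) = \<phi> \<one>\<^bsub>G\<^esub> * \<phi> \<one>\<^bsub>G\<^esub>"
    using assms(1,2) unfolding char_on_def by blast
  then have eq: "\<phi> \<one>\<^bsub>G\<^esub> = \<phi> \<one>\<^bsub>G\<^esub> * \<phi> \<one>\<^bsub>G\<^esub>" unfolding o .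
  have nz: "\<phi> \<one>\<^bsub>G\<^esub> \<noteq> 0" using assms(1,2) unfolding char_on_def by blast
  show ?thesis using nz eq by simp
qed

lemma char_pow:
  assumes "group G" "subgroup S G" "char_on G S \<phi>" "x \<in> S"
  shows "x [^]\<^bsub>G\<^esub> (n::nat) \<in> S \<and> \<phi> (x [^]\<^bsub>G\<^esub> n) = \<phi> x ^ n"
proof (induction n)
  case 0
  have S1: "\<one>\<^bsub>G\<^esub> \<in> S" using assms(2) by (rule subgroup.one_closed)
  have "\<phi> \<one>\<^bsub>G\<^esub> = 1" using char_one[OF assms(3) S1 group.is_monoid[OF assms(1)]] .
  then show ?case using S1 by simp
next
  case (Suc n)
  have eq: "x [^]\<^bsub>G\<^esub> Suc n = x [^]\<^bsub>G\<^esub> n \<otimes>\<^bsub>G\<^esub> x"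
    using monoid.nat_pow_Suc[OF group.is_monoid[OF assms(1)]] .
  have IH1: "x [^]\<^bsub>G\<^esub> n \<in> S" and IH2: "\<phi> (x [^]\<^bsub>G\<^esub> n) = \<phi> x ^ n" using Suc by auto
  have c: "x [^]\<^bsub>G\<^esub> Suc n \<in> S" unfolding eq using subgroup.m_closed[OF assms(2) IH1 assms(4)] .
  have "\<phi> (x [^]\<^bsub>G\<^esub> n \<otimes>\<^bsub>G\<^esub> x) = \<phi> (x [^]\<^bsub>G\<^esub> n) * \<phi> x"
    using assms(3) IH1 assms(4) unfolding char_on_def by blast
  then have "\<phi> (x [^]\<^bsub>G\<^esub> Suc n) = \<phi> x ^ Suc n" unfolding eq IH2 by (simp add: mult.commute)
  with c show ?case by blast
qed

lemma char_restrict: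
  assumes "char_on G (carrier G) \<phi>" "S \<subseteq> carrier G"
  shows "char_on G S \<phi>"
  using assms unfolding char_on_def by blast

lemma char_prod:
  fixes G (structure)
  assumes "comm_group G" "char_on G (carrier G) \<phi>" "finite I" "h \<in> I \<rightarrow> carrier G"
  shows "\<phi> (finprod G h I) = (\<Prod>i\<in>I. \<phi> (h i))"
  using assms(3,4)
proof (induction I rule: finite_induct)
  case empty
  interpret comm_group G by (rule assms(1))
  show ?case using char_one[OF assms(2)] by simp
next
  case (insert a I)
  interpret comm_group G by (rule assms(1))
  have ha: "h a \<in> carrier G" and hI: "h \<in> I \<rightarrow> carrier G" using insert by auto
  have "finprod G h (insert a I) = h a \<otimes> finprod G h I"
    using insert ha hI by simp
  then show ?case using insert ha hI assms(2) unfolding char_on_def by simp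
qed

lemma cyclic_facts:
  fixes G (structure)
  assumes grp: "group G" and fin: "finite (carrier G)" and IG: "in_IG G H \<psi>"
  shows "\<forall>x\<in>H. \<psi> x ^ card H = 1"
    and "\<And>r r'. r < card H \<Longrightarrow> r' < card H \<Longrightarrow> (\<forall>x\<in>H. \<psi> x ^ r = \<psi> x ^ r') \<Longrightarrow> r = r'"
proof -
  interpret group G by (rule grp)
  have sub: "subgroup H G" and cyc: "cyclic_group (subgroup_generated G H)" and c2: "card H \<ge> 2"
    and gd: "generates_dual G H \<psi>" using IG unfolding in_IG_def by auto
  have ch: "char_on G H \<psi>" using gd unfolding generates_dual_def by auto
  have Hc: "carrier (subgroup_generated G H) = H"
    using sub by (rule subgroup.carrier_subgroup_generated_subgroup)
  obtain g where gH: "g \<in> H"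
    and gen: "subgroup_generated (subgroup_generated G H) {g} = subgroup_generated G H"
    using cyc Hc unfolding cyclic_group_def by auto
  have gG: "g \<in> carrier G" using gH sub subgroup.subset by blast
  have H_eq: "H = generate G {g}"
  proof -
    have "H = carrier (subgroup_generated (subgroup_generated G H) {g})" using gen Hc by simp
    also have "\<dots> = range (\<lambda>n::int. g [^]\<^bsub>subgroup_generated G H\<^esub> n)"
      by (rule group.carrier_subgroup_generated_by_singleton) (simp, simp add: Hc gH)
    also have "\<dots> = range (\<lambda>n::int. g [^] n)"
      using int_pow_subgroup_generated[of g H] gH Hc by simp
    also have "\<dots> = generate G {g}" using generate_pow[OF gG] by auto
    finally show ?thesis .
  qed
  define m where "m = card H"
  have mord: "ord g = m" using generate_pow_card[OF gG] H_eq m_def by simp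
  have Hpow: "H = {g [^] (k::nat) | k. k \<in> UNIV}"
    using generate_pow_on_finite_carrier[OF fin gG] H_eq by simp
  have m2: "m \<ge> 2" using c2 m_def by simp
  have psi_pow: "\<psi> (x [^] (n::nat)) = \<psi> x ^ n" if "x \<in> H" for x n
    using char_pow[OF grp sub ch that] by blast
  have psi1: "\<psi> \<one> = 1" using char_one[OF ch] sub subgroup.one_closed is_monoid by blast
  show "\<forall>x\<in>H. \<psi> x ^ card H = 1"
  proof
    fix x assume xH: "x \<in> H"
    then obtain t::nat where x: "x = g [^] t" using Hpow by auto
    have "x [^] m = (g [^] m) [^] t" using gG by (simp add: x nat_pow_pow mult.commute)
    also have "\<dots> = \<one>" using gG mord[symmetric] by simp
    finally have "x [^] m = \<one>" .
    then show "\<psi> x ^ card H = 1" using psi_pow[OF xH, of m] psi1 m_def by simp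
  qed
  define \<omega> :: complex where "\<omega> = exp (2 * pi * \<i> / of_nat m)"
  have m1: "m \<ge> 1" using m2 by simp
  have om0: "\<omega> \<noteq> 0" unfolding \<omega>_def by simp
  define \<phi> where "\<phi> x = \<omega> ^ (SOME t::nat. x = g [^] t)" for x
  have phi_pow: "\<phi> (g [^] t) = \<omega> ^ t" for t::nat
  proof -
    define t' where "t' = (SOME t'::nat. g [^] t = g [^] t')"
    have "g [^] t = g [^] t'" unfolding t'_def by (rule someI_ex) blast
    then have "g [^] (int t) = g [^] (int t')" by (simp add: int_pow_int)
    then have dv: "int m dvd (int t' - int t)" using int_pow_eq[OF gG] mord by simp
    have p: "\<omega> powi (int t' - int t) = 1" using root_int[OF m1] dv unfolding \<omega>_def by simp
    have "\<omega> ^ t' = \<omega> powi (int t + (int t' - int t))" by simp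
    also have "\<dots> = \<omega> powi int t * \<omega> powi (int t' - int t)" by (rule power_int_add) (simp add: om0)
    also have "\<dots> = \<omega> ^ t" using p by simp
    finally have "\<omega> ^ t' = \<omega> ^ t" .
    then show ?thesis unfolding \<phi>_def t'_def by simp
  qed
  have phi_char: "char_on G H \<phi>"
    unfolding char_on_def
  proof (intro conjI ballI)
    fix x assume "x \<in> H"
    then show "\<phi> x \<noteq> 0" unfolding \<phi>_def using om0 by simp
  next
    fix x y assume "x \<in> H" "y \<in> H"
    then obtain a b :: nat where "x = g [^] a" "y = g [^] b" using Hpow by auto
    then show "\<phi> (x \<otimes> y) = \<phi> x * \<phi> y" using gG by (simp add: nat_pow_mult phi_pow power_add)
  qed
  obtain n where n: "\<forall>x\<in>H. \<phi> x = \<psi> x ^ n" using gd phi_char unfolding generates_dual_def by blast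
  have "\<phi> g = \<omega>" using phi_pow[of 1] gG by simp
  then have omn: "\<omega> = \<psi> g ^ n" using n gH by simp
  have psig0: "\<psi> g \<noteq> 0" using ch gH unfolding char_on_def by blast
  have key: "d = 0" if "d < m" "\<psi> g ^ d = 1" for d
  proof -
    have "\<omega> ^ d = (\<psi> g ^ d) ^ n" unfolding omn by (metis power_mult mult.commute)
    then have "\<omega> ^ d = 1" using that(2) by simp
    then have "m dvd d" using root_nat[OF m1] unfolding \<omega>_def by simp
    then show ?thesis using that(1) by (cases "d = 0") (auto dest: dvd_imp_le)
  qed
  have key2: "r = r'" if "r \<le> r'" "r' < m" "\<psi> g ^ r = \<psi> g ^ r'" for r r'
  proof -
    have "\<psi> g ^ r' = \<psi> g ^ r * \<psi> g ^ (r' - r)" using that(1) by (simp flip: power_add)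
    then have "\<psi> g ^ (r' - r) = 1" using that(3) psig0 by simp
    moreover have "r' - r < m" using that by simp
    ultimately have "r' - r = 0" using key by blast
    then show ?thesis using that(1) by simp
  qed
  fix r r' assume "r < card H" "r' < card H" "\<forall>x\<in>H. \<psi> x ^ r = \<psi> x ^ r'"
  then have "r < m" "r' < m" "\<psi> g ^ r = \<psi> g ^ r'" using gH m_def by auto
  then show "r = r'"
  proof (cases "r \<le> r'")
    case True then show ?thesis using key2 \<open>r' < m\<close> \<open>\<psi> g ^ r = \<psi> g ^ r'\<close> by blast
  next
    case False then have "r' \<le> r" by simp
    then show ?thesis using key2[of r' r] \<open>r < m\<close> \<open>\<psi> g ^ r = \<psi> g ^ r'\<close> by simp
  qed
qed

lemma r_coef_prop:
  assumes grp: "group G" and fin: "finite (carrier G)" and IG: "in_IG G H \<psi>" and ch: "char_on G H \<chi>"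
  shows "r_coef H \<psi> \<chi> < card H \<and> (\<forall>x\<in>H. \<chi> x = \<psi> x ^ r_coef H \<psi> \<chi>)"
proof -
  note cf = cyclic_facts[OF grp fin IG]
  obtain n where n: "\<forall>x\<in>H. \<chi> x = \<psi> x ^ n" using IG ch unfolding in_IG_def generates_dual_def by blast
  have c0: "card H > 0" using IG unfolding in_IG_def by auto
  have ex: "n mod card H < card H \<and> (\<forall>x\<in>H. \<chi> x = \<psi> x ^ (n mod card H))"
  proof (intro conjI ballI)
    show "n mod card H < card H" using c0 by simp
    fix x assume xH: "x \<in> H"
    have a: "\<psi> x ^ n = \<psi> x ^ (n div card H * card H) * \<psi> x ^ (n mod card H)"
      by (simp flip: power_add)
    have "\<psi> x ^ (n div card H * card H) = (\<psi> x ^ card H) ^ (n div card H)"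
      by (metis power_mult mult.commute)
    also have "\<dots> = 1" using cf(1) xH by simp
    finally show "\<chi> x = \<psi> x ^ (n mod card H)" using a n xH by simp
  qed
  show ?thesis unfolding r_coef_def
  proof (rule theI[of _ "n mod card H"])
    show "n mod card H < card H \<and> (\<forall>x\<in>H. \<chi> x = \<psi> x ^ (n mod card H))" by (rule ex)
  next
    fix r assume "r < card H \<and> (\<forall>x\<in>H. \<chi> x = \<psi> x ^ r)"
    then show "r = n mod card H" using ex cf(2)[of r "n mod card H"] by auto
  qed
qed

lemma common_denom:
  fixes v :: "nat \<Rightarrow> rat"
  shows "\<exists>D::int. D > 0 \<and> (\<forall>j<s. \<exists>z::int. of_int D * v j = of_int z)"
proof (induction s)
  case 0
  then show ?case by (intro exI[of _ 1]) auto
next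
  case (Suc s)
  then obtain D where D: "D > 0" "\<forall>j<s. \<exists>z::int. of_int D * v j = of_int z" by blast
  obtain p q where pq: "quotient_of (v s) = (p, q)" by (cases "quotient_of (v s)")
  have q: "q > 0" using pq quotient_of_denom_pos by blast
  have vs: "v s = of_int p / of_int q" using pq quotient_of_div by blast
  show ?case
  proof (rule exI[of _ "D*q"], intro conjI allI impI)
    show "D*q > 0" using D q by simp
    fix j assume j: "j < Suc s"
    show "\<exists>z. of_int (D*q) * v j = of_int z"
    proof (cases "j < s")
      case True
      then obtain z where "of_int D * v j = of_int z" using D by blast
      then have "of_int (D*q) * v j = of_int (z*q)" by (simp add: algebra_simps)
      then show ?thesis by blast
    next
      case False
      then have "j = s" using j by simp
      then have "of_int (D*q) * v j = of_int (D*p)" using q vs by simp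
      then show ?thesis by blast
    qed
  qed
qed


lemma descent:
  fixes r :: "nat \<Rightarrow> nat \<Rightarrow> nat" and d :: int
  assumes d2: "d \<ge> 2"
    and dv: "\<And>a::nat\<Rightarrow>int. \<forall>i<k. (\<Sum>j<s. int (r i j) * a j) = 0 \<Longrightarrow> \<forall>j<s. d dvd a j"
  shows "\<forall>a::nat\<Rightarrow>int. (\<Sum>j<s. nat \<bar>a j\<bar>) = N \<longrightarrow> (\<forall>i<k. (\<Sum>j<s. int (r i j) * a j) = 0) \<longrightarrow> (\<forall>j<s. a j = 0)"
proof (induction N rule: less_induct)
  case (less N)
  show ?case
  proof (rule allI, rule impI, rule impI)
    fix a :: "nat \<Rightarrow> int"
    assume aN: "(\<Sum>j<s. nat \<bar>a j\<bar>) = N" and ak: "\<forall>i<k. (\<Sum>j<s. int (r i j) * a j) = 0"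
    show "\<forall>j<s. a j = 0"
    proof (rule ccontr)
      assume "\<not> (\<forall>j<s. a j = 0)"
      then obtain j0 where j0: "j0 < s" "a j0 \<noteq> 0" by blast
      have dva: "\<forall>j<s. d dvd a j" using dv ak by blast
      define b where "b j = a j div d" for j
      have ab: "a j = d * b j" if "j < s" for j using dva that unfolding b_def by simp
      have bk: "\<forall>i<k. (\<Sum>j<s. int (r i j) * b j) = 0"
      proof (intro allI impI)
        fix i assume "i < k"
        have "d * (\<Sum>j<s. int (r i j) * b j) = (\<Sum>j<s. int (r i j) * a j)"
          by (simp add: sum_distrib_left ab algebra_simps)
        also have "\<dots> = 0" using ak \<open>i < k\<close> by simp
        finally show "(\<Sum>j<s. int (r i j) * b j) = 0" using d2 by simp
      qed
      have le: "nat \<bar>b j\<bar> \<le> nat \<bar>a j\<bar>" if "j < s" for j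
      proof -
        have "\<bar>a j\<bar> = d * \<bar>b j\<bar>" using ab[OF that] d2 by (simp add: abs_mult)
        moreover have "1 * \<bar>b j\<bar> \<le> d * \<bar>b j\<bar>" by (rule mult_right_mono) (use d2 in auto)
        ultimately show ?thesis by (simp add: nat_mono)
      qed
      have lt: "nat \<bar>b j0\<bar> < nat \<bar>a j0\<bar>"
      proof -
        have "\<bar>a j0\<bar> = d * \<bar>b j0\<bar>" using ab[OF j0(1)] d2 by (simp add: abs_mult)
        moreover have "b j0 \<noteq> 0" using ab[OF j0(1)] j0(2) by auto
        then have "1 * \<bar>b j0\<bar> < d * \<bar>b j0\<bar>" by (intro mult_strict_right_mono) (use d2 in auto)
        ultimately show ?thesis by (simp add: zless_nat_conj)
      qed
      have "(\<Sum>j<s. nat \<bar>b j\<bar>) < (\<Sum>j<s. nat \<bar>a j\<bar>)"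
      proof (rule sum_strict_mono_ex1)
        show "finite {..<s}" by simp
        show "\<forall>x\<in>{..<s}. nat \<bar>b x\<bar> \<le> nat \<bar>a x\<bar>" using le by simp
        show "\<exists>x\<in>{..<s}. nat \<bar>b x\<bar> < nat \<bar>a x\<bar>" using lt j0(1) by auto
      qed
      then have lessN: "(\<Sum>j<s. nat \<bar>b j\<bar>) < N" using aN by simp
      have "(\<Sum>j<s. nat \<bar>b j\<bar>) = (\<Sum>j<s. nat \<bar>b j\<bar>) \<longrightarrow>
        (\<forall>i<k. (\<Sum>j<s. int (r i j) * b j) = 0) \<longrightarrow> (\<forall>j<s. b j = 0)"
        using less.IH[OF lessN] by (rule spec)
      then have "\<forall>j<s. b j = 0" using bk by simp
      then have "b j0 = 0" using j0(1) by blast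
      then show False using ab[OF j0(1)] j0(2) by simp
    qed
  qed
qed

theorem lemma2p1:
  fixes G (structure)
    and s k :: nat
    and e :: "nat \<Rightarrow> 'a"
    and \<chi> :: "nat \<Rightarrow> 'a \<Rightarrow> complex"
    and H :: "nat \<Rightarrow> 'a set"
    and \<psi> :: "nat \<Rightarrow> 'a \<Rightarrow> complex"
  assumes "comm_group G"
    and "finite (carrier G)"
    and "is_basis G s e"
    and "is_dual_basis G s e \<chi>"
    and "\<forall>i<k. in_IG G (H i) (\<psi> i)"
    and "inj_on (\<lambda>i. (H i, restrict (\<psi> i) (H i))) {..<k}"
    and "\<forall>g\<in>carrier G. \<exists>h. (\<forall>i<k. h i \<in> H i) \<and> g = finprod G h {..<k}"
  shows "vec_space.rank k
           (mat k s (\<lambda>(i, j). rat_of_nat (r_coef (H i) (\<psi> i) (\<chi> j)))) = s"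
proof -
  interpret G: comm_group G by (rule assms(1))
  define r where "r i j = r_coef (H i) (\<psi> i) (\<chi> j)" for i j
  define A where "A = mat k s (\<lambda>(i, j). rat_of_nat (r i j))"
  have IG: "in_IG G (H i) (\<psi> i)" if "i < k" for i using assms(5) that by blast
  have Hsg: "subgroup (H i) G" if "i < k" for i
    using IG[OF that] unfolding in_IG_def by (rule conjunct1)
  have Hsub: "H i \<subseteq> carrier G" if "i < k" for i
    using Hsg[OF that] by (rule subgroup.subset)
  have gdi: "generates_dual G (H i) (\<psi> i)" if "i < k" for i
    using IG[OF that] unfolding in_IG_def by (elim conjE) assumption
  have psich: "char_on G (H i) (\<psi> i)" if "i < k" for i
    using gdi[OF that] unfolding generates_dual_def by (rule conjunct1)
  have dual1: "\<forall>j<s. char_on G (carrier G) (\<chi> j)"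
    using assms(4) unfolding is_dual_basis_def by (rule conjunct1)
  have dual2: "\<forall>i<s. \<forall>j<s. \<chi> j (e i) =
        (if i = j then exp (2 * pi * \<i> / of_nat (G.ord (e i))) else 1)"
    using assms(4) unfolding is_dual_basis_def by (rule conjunct2)
  have chG: "char_on G (carrier G) (\<chi> j)" if "j < s" for j
    using dual1 that by simp
  have chie: "\<chi> j (e i) = (if i = j then exp (2 * pi * \<i> / of_nat (G.ord (e i))) else 1)"
    if "i < s" "j < s" for i j
    using dual2 that by blast
  have bas1: "\<forall>j<s. e j \<in> carrier G \<and> e j \<noteq> \<one>"
    using assms(3) unfolding is_basis_def by (rule conjunct1)
  have bas2: "\<forall>j. Suc j < s \<longrightarrow> G.ord (e j) dvd G.ord (e (Suc j))"
    using assms(3) unfolding is_basis_def by (elim conjE) assumption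
  have rprop: "\<forall>x\<in>H i. \<chi> j x = \<psi> i x ^ r i j" if "i < k" "j < s" for i j
    using r_coef_prop[OF G.is_group assms(2) IG[OF that(1)] char_restrict[OF chG[OF that(2)] Hsub[OF that(1)]]]
    unfolding r_def by blast
  have e_car: "e j \<in> carrier G" and e_ne: "e j \<noteq> \<one>" if "j < s" for j
    using bas1 that by auto
  have ord1: "G.ord (e j) \<ge> 1" if "j < s" for j using G.ord_ge_1[OF assms(2) e_car[OF that]] .
  have ord2: "G.ord (e j) \<ge> 2" if "j < s" for j
    using ord1[OF that] G.ord_eq_1[OF e_car[OF that]] e_ne[OF that] by linarith
  have ord_dvd: "j < s \<longrightarrow> G.ord (e 0) dvd G.ord (e j)" for j
  proof (induction j)
    case 0 then show ?case by simp
  next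
    case (Suc j)
    have "Suc j < s \<longrightarrow> G.ord (e j) dvd G.ord (e (Suc j))" using bas2 by blast
    then show ?case using Suc dvd_trans by (metis Suc_lessD)
  qed
  have divides: "int (G.ord (e j)) dvd a j"
    if a0: "\<forall>i<k. (\<Sum>l<s. int (r i l) * a l) = 0" and js: "j < s" for a :: "nat \<Rightarrow> int" and j
  proof -
    define Xc where "Xc x = (\<Prod>l<s. \<chi> l x powi a l)" for x
    have Xch: "char_on G (carrier G) Xc"
      unfolding char_on_def
    proof (intro conjI ballI)
      fix x assume x: "x \<in> carrier G"
      have "\<chi> l x \<noteq> 0" if "l < s" for l using chG[OF that] x unfolding char_on_def by blast
      then show "Xc x \<noteq> 0" unfolding Xc_def by (simp add: power_int_eq_0_iff)
    next
      fix x y assume x: "x \<in> carrier G" and y: "y \<in> carrier G"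
      have ml: "\<chi> l (x \<otimes> y) powi a l = (\<chi> l x * \<chi> l y) powi a l" if "l \<in> {..<s}" for l
        using chG[of l] x y that unfolding char_on_def by simp
      have "Xc (x \<otimes> y) = (\<Prod>l<s. (\<chi> l x * \<chi> l y) powi a l)"
        unfolding Xc_def by (rule prod.cong[OF refl ml])
      also have "\<dots> = Xc x * Xc y" unfolding Xc_def by (simp add: power_int_mult_distrib prod.distrib)
      finally show "Xc (x \<otimes> y) = Xc x * Xc y" .
    qed
    have XH: "Xc x = 1" if "i < k" "x \<in> H i" for i x
    proof -
      have p0: "\<psi> i x \<noteq> 0" using psich[OF that(1)] that(2) unfolding char_on_def by blast
      have pl: "\<chi> l x powi a l = \<psi> i x powi (int (r i l) * a l)" if "l \<in> {..<s}" for l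
      proof -
        have "\<chi> l x = \<psi> i x ^ r i l" using rprop[of i l] \<open>i < k\<close> \<open>x \<in> H i\<close> that by simp
        then show ?thesis by (simp add: power_int_mult)
      qed
      have "Xc x = (\<Prod>l<s. \<psi> i x powi (int (r i l) * a l))"
        unfolding Xc_def by (rule prod.cong[OF refl pl])
      also have "\<dots> = \<psi> i x powi (\<Sum>l<s. int (r i l) * a l)" by (rule power_int_sum[OF p0, symmetric])
      also have "\<dots> = 1" using a0 that(1) by simp
      finally show ?thesis .
    qed
    have Xc1: "Xc g = 1" if "g \<in> carrier G" for g
    proof -
      have "\<exists>h. (\<forall>i<k. h i \<in> H i) \<and> g = finprod G h {..<k}" using assms(7) that by (rule bspec)
      then obtain h where h: "\<forall>i<k. h i \<in> H i" "g = finprod G h {..<k}" by (elim exE conjE)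
      have hc: "h \<in> {..<k} \<rightarrow> carrier G"
      proof
        fix i assume "i \<in> {..<k}"
        then show "h i \<in> carrier G" using h(1) Hsub by blast
      qed
      have "Xc g = (\<Prod>i<k. Xc (h i))" using char_prod[OF assms(1) Xch _ hc] h(2) by simp
      also have "\<dots> = 1" using XH h(1) by simp
      finally show ?thesis .
    qed
    have el: "\<chi> l (e j) powi a l = (if l = j then exp (2 * pi * \<i> / of_nat (G.ord (e j))) powi a j else 1)"
      if "l \<in> {..<s}" for l
    proof (cases "l = j")
      case True then show ?thesis using chie[of j l] js that by simp
    next
      case False then show ?thesis using chie[of j l] js that by simp
    qed
    have "Xc (e j) = (\<Prod>l<s. if l = j then exp (2 * pi * \<i> / of_nat (G.ord (e j))) powi a j else 1)"
      unfolding Xc_def by (rule prod.cong[OF refl el])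
    also have "\<dots> = exp (2 * pi * \<i> / of_nat (G.ord (e j))) powi a j" using js by simp
    finally have "exp (2 * pi * \<i> / of_nat (G.ord (e j))) powi a j = 1" using Xc1[OF e_car[OF js]] by simp
    then show ?thesis using root_int[OF ord1[OF js]] by simp
  qed
  have zero: "\<forall>j<s. a j = 0" if "\<forall>i<k. (\<Sum>j<s. int (r i j) * a j) = 0" for a :: "nat \<Rightarrow> int"
  proof (cases "s = 0")
    case True then show ?thesis by simp
  next
    case False
    then have s0: "0 < s" by simp
    have dvall: "\<forall>j<s. int (G.ord (e 0)) dvd a j"
      if "\<forall>i<k. (\<Sum>j<s. int (r i j) * a j) = 0" for a :: "nat \<Rightarrow> int"
    proof (intro allI impI)
      fix j assume "j < s"
      have "G.ord (e 0) dvd G.ord (e j)" using ord_dvd \<open>j < s\<close> by blast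
      then have "int (G.ord (e 0)) dvd int (G.ord (e j))" by simp
      then show "int (G.ord (e 0)) dvd a j" using divides[OF that \<open>j < s\<close>] by (rule dvd_trans)
    qed
    have d2: "int (G.ord (e 0)) \<ge> 2" using ord2[OF s0] by simp
    have D: "(\<Sum>j<s. nat \<bar>a j\<bar>) = (\<Sum>j<s. nat \<bar>a j\<bar>) \<longrightarrow>
        (\<forall>i<k. (\<Sum>j<s. int (r i j) * a j) = 0) \<longrightarrow> (\<forall>j<s. a j = 0)"
      using descent[OF d2 dvall] by (rule spec)
    show ?thesis using mp[OF mp[OF D refl] that] .
  qed
  have Acar: "A \<in> carrier_mat k s" unfolding A_def by simp
  have kern: "v = 0\<^sub>v s" if v: "v \<in> carrier_vec s" and Av: "A *\<^sub>v v = 0\<^sub>v k" for v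
  proof -
    have eq: "(\<Sum>j<s. of_nat (r i j) * v $ j) = 0" if "i < k" for i
    proof -
      have "(A *\<^sub>v v) $ i = 0" using Av that by simp
      moreover have "(A *\<^sub>v v) $ i = (\<Sum>j<s. of_nat (r i j) * v $ j)"
        using that v unfolding A_def by (auto simp: scalar_prod_def lessThan_atLeast0 intro!: sum.cong)
      ultimately show ?thesis by simp
    qed
    obtain D where D: "D > 0" "\<forall>j<s. \<exists>z::int. of_int D * v $ j = of_int z"
      using common_denom[of s "\<lambda>j. v $ j"] by blast
    define a where "a j = (SOME z::int. of_int D * v $ j = of_int z)" for j
    have a: "of_int D * v $ j = of_int (a j)" if "j < s" for j
      unfolding a_def by (rule someI_ex[of "\<lambda>z. of_int D * v $ j = of_int z"]) (use D(2) that in blast)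
    have "\<forall>i<k. (\<Sum>j<s. int (r i j) * a j) = 0"
    proof (intro allI impI)
      fix i assume i: "i < k"
      have "(of_int (\<Sum>j<s. int (r i j) * a j) :: rat) = (\<Sum>j<s. of_nat (r i j) * (of_int D * v $ j))"
        using a by (simp add: of_int_sum)
      also have "\<dots> = of_int D * (\<Sum>j<s. of_nat (r i j) * v $ j)" by (simp add: sum_distrib_left algebra_simps)
      also have "\<dots> = 0" using eq i by simp
      finally have "(of_int (\<Sum>j<s. int (r i j) * a j) :: rat) = 0" .
      then show "(\<Sum>j<s. int (r i j) * a j) = 0" by (simp only: of_int_eq_0_iff)
    qed
    then have "\<forall>j<s. a j = 0" by (rule zero)
    have "v $ j = 0" if "j < s" for j
    proof -
      have "of_int D * v $ j = 0" using a[OF that] \<open>\<forall>j<s. a j = 0\<close> that by simp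
      then show ?thesis using D(1) by simp
    qed
    then have "\<forall>j<s. v $ j = 0" by blast
    then show "v = 0\<^sub>v s" using v by (intro eq_vecI) auto
  qed
  interpret vs: vec_space "TYPE(rat)" k .
  have dist: "distinct (cols A)"
  proof (rule ccontr)
    assume "\<not> distinct (cols A)"
    then obtain i j where ij: "i < s" "j < s" "i \<noteq> j" "cols A ! i = cols A ! j"
      using Acar by (auto simp: distinct_conv_nth)
    define v :: "rat vec" where "v = vec s (\<lambda>l. (if l = i then 1 else 0) - (if l = j then 1 else 0))"
    have vc: "v \<in> carrier_vec s" unfolding v_def by simp
    have colij: "A $$ (l, i) = A $$ (l, j)" if "l < k" for l
    proof -
      have "col A i = col A j" using ij Acar cols_nth[of i A] cols_nth[of j A] by simp
      then have "col A i $ l = col A j $ l" by simp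
      then show ?thesis using ij that Acar by simp
    qed
    have "A *\<^sub>v v = 0\<^sub>v k"
    proof (rule eq_vecI)
      fix l assume "l < dim_vec (0\<^sub>v k :: rat vec)"
      then have l: "l < k" by simp
      have "(A *\<^sub>v v) $ l = (\<Sum>t\<in>{0..<s}. A $$ (l, t) * ((if t = i then 1 else 0) - (if t = j then 1 else 0)))"
        using l Acar unfolding v_def by (auto simp: scalar_prod_def intro!: sum.cong)
      also have "\<dots> = (\<Sum>t\<in>{0..<s}. (if t = i then A $$ (l, t) else 0) - (if t = j then A $$ (l, t) else 0))"
        by (intro sum.cong refl) auto
      also have "\<dots> = A $$ (l, i) - A $$ (l, j)"
        using ij by (simp add: sum_subtractf)
      also have "\<dots> = 0" using colij[OF l] by simp
      finally show "(A *\<^sub>v v) $ l = (0\<^sub>v k :: rat vec) $ l" using l by simp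
    qed (use Acar in simp)
    then have "v = 0\<^sub>v s" using kern vc by blast
    moreover have "v $ i = 1" unfolding v_def using ij by simp
    ultimately show False using ij by simp
  qed
  have li: "vs.lin_indpt (set (cols A))"
  proof
    assume "vs.lin_dep (set (cols A))"
    then obtain v where "v \<in> carrier_vec s" "v \<noteq> 0\<^sub>v s" "A *\<^sub>v v = 0\<^sub>v k"
      using vs.lin_depE[OF Acar _ dist] by blast
    then show False using kern by blast
  qed
  have "vs.rank A = s" by (rule vs.lin_indpt_full_rank[OF Acar dist li])
  then show ?thesis unfolding A_def r_def by simp
qed

end
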